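(* Let $q$ be a prime power and let $C\subseteq\mathbb{F}_q^n$ be an $[n,\ell,d]_q$ classical linear code such that $C^{*3}:=\mathrm{span}\{c_1*c_2*c_3: c_1,c_2,c_3\in C\}$ has distance $d'$ and $C^\perp$ has distance $d^\perp$. Then for every positive integer $k<\min\{\ell,d,d',d^\perp\}$, there exists an $[[n-k,\,k,\,\geq\min\{d,d^\perp\}-k]]_q$ quantum CSS code that supports a transversal $CCZ_q$ gate.
   Context: $x*y$ denotes the componentwise product in $\mathbb{F}_q^n$, $x\cdot y=\sum_ix_iy_i$, and $V^\perp$ is the dual w.r.t. this form. An $[n,\ell,d]_q$ classical code is an $\ell$-dimensional subspace of $\mathbb{F}_q^n$ with minimum Hamming weight of nonzero codewords $d$. A quantum CSS code $\mathrm{CSS}(Q_X,Q_Z)$ of length $n$ over $\mathbb{F}_q$ is a pair of subspaces $Q_X,Q_Z\subseteq\mathbb{F}_q^n$ with $Q_X^\perp\subseteq Q_Z$, of dimension $k=\dim Q_Z-\dim Q_X^\perp$ and distance $\min\{|y|:y\in(Q_X\setminus Q_Z^\perp)\cup(Q_Z\setminus Q_X^\perp)\}$ ($|y|$ Hamming weight); it is an $[[n,k,d]]_q$ code. A $Z$ encoding function is an $\mathbb{F}_q$-linear isomorphism $\mathrm{Enc}_Z:\mathbb{F}_q^k\to Q_Z/Q_X^\perp$. A code $Q$ with $Z$ encoding function supports a transversal $CCZ_q$ gate if there is a coefficients vector $b\in\mathbb{F}_q^n$ such that for all $z^{(1)},z^{(2)},z^{(3)}\in\mathbb{F}_q^k$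 and all $z^{(h)\prime}\in\mathrm{Enc}_Z(z^{(h)})$, $\sum_{j\in[k]}z^{(1)}_jz^{(2)}_jz^{(3)}_j=\sum_{j\in[n]}b_jz^{(1)\prime}_jz^{(2)\prime}_jz^{(3)\prime}_j$. *)

theory Defs
  imports Complex_Main "HOL-Library.Function_Algebras"
begin

text \<open>Vectors of \<open>F_q^n\<close> are represented as functions \<open>nat \<Rightarrow> 'a\<close> vanishing outside
  \<open>{..<n}\<close>; the field \<open>F_q\<close> is a finite field type \<open>'a\<close> (so \<open>q = CARD('a)\<close>).
  Addition and the componentwise product \<open>x * y\<close> are the pointwise operations.\<close>

definition fscale :: "'a::field \<Rightarrow> (nat \<Rightarrow> 'a) \<Rightarrow> (nat \<Rightarrow> 'a)" where
  "fscale c x = (\<lambda>i. c * x i)"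

interpretation fv: vector_space "fscale :: 'a::field \<Rightarrow> (nat \<Rightarrow> 'a) \<Rightarrow> (nat \<Rightarrow> 'a)"
  by unfold_locales (auto simp: fscale_def fun_eq_iff algebra_simps)

definition vecs :: "nat \<Rightarrow> (nat \<Rightarrow> 'a::zero) set" where
  "vecs n = {x. \<forall>i\<ge>n. x i = 0}"

definition code_subspace :: "nat \<Rightarrow> (nat \<Rightarrow> 'a::field) set \<Rightarrow> bool" where
  "code_subspace n V \<longleftrightarrow> V \<subseteq> vecs n \<and> fv.subspace V"

definition dotp :: "nat \<Rightarrow> (nat \<Rightarrow> 'a::field) \<Rightarrow> (nat \<Rightarrow> 'a) \<Rightarrow> 'a" where
  "dotp n x y = (\<Sum>i<n. x i * y i)"

definition dual :: "nat \<Rightarrow> (nat \<Rightarrow> 'a::field) set \<Rightarrow> (nat \<Rightarrow> 'a) set" where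
  "dual n V = {y \<in> vecs n. \<forall>x\<in>V. dotp n x y = 0}"

definition hweight :: "nat \<Rightarrow> (nat \<Rightarrow> 'a::zero) \<Rightarrow> nat" where
  "hweight n x = card {i. i < n \<and> x i \<noteq> 0}"

definition has_distance :: "nat \<Rightarrow> (nat \<Rightarrow> 'a::field) set \<Rightarrow> nat \<Rightarrow> bool" where
  "has_distance n V d \<longleftrightarrow>
     (\<exists>x\<in>V. x \<noteq> 0 \<and> hweight n x = d) \<and> (\<forall>x\<in>V. x \<noteq> 0 \<longrightarrow> d \<le> hweight n x)"

definition cube_code :: "(nat \<Rightarrow> 'a::field) set \<Rightarrow> (nat \<Rightarrow> 'a) set" where
  "cube_code C = fv.span {c1 * c2 * c3 | c1 c2 c3. c1 \<in> C \<and> c2 \<in> C \<and> c3 \<in> C}"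

definition classical_code :: "nat \<Rightarrow> nat \<Rightarrow> nat \<Rightarrow> (nat \<Rightarrow> 'a::field) set \<Rightarrow> bool" where
  "classical_code n l d C \<longleftrightarrow> code_subspace n C \<and> fv.dim C = l \<and> has_distance n C d"

definition css_code_ge :: "nat \<Rightarrow> nat \<Rightarrow> nat \<Rightarrow> (nat \<Rightarrow> 'a::field) set \<Rightarrow> (nat \<Rightarrow> 'a) set \<Rightarrow> bool" where
  "css_code_ge n k D QX QZ \<longleftrightarrow>
     code_subspace n QX \<and> code_subspace n QZ \<and> dual n QX \<subseteq> QZ \<and>
     fv.dim QZ - fv.dim (dual n QX) = k \<and> fv.dim (dual n QX) \<le> fv.dim QZ \<and>
     (\<forall>y \<in> (QX - dual n QZ) \<union> (QZ - dual n QX). D \<le> hweight n y)"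

text \<open>A \<open>Z\<close> encoding function \<open>F_q^k \<rightarrow> Q_Z/Q_X^\<perp>\<close>, represented by a linear lift
  \<open>E\<close>: \<open>Enc(z) = E z + Q_X^\<perp>\<close>. The induced map to the quotient must be an isomorphism.\<close>
definition z_encoding :: "nat \<Rightarrow> nat \<Rightarrow> (nat \<Rightarrow> 'a::field) set \<Rightarrow> (nat \<Rightarrow> 'a) set
    \<Rightarrow> ((nat \<Rightarrow> 'a) \<Rightarrow> (nat \<Rightarrow> 'a)) \<Rightarrow> bool" where
  "z_encoding n k QX QZ E \<longleftrightarrow>
     Vector_Spaces.linear fscale fscale E \<and> E ` vecs k \<subseteq> QZ \<and>
     (\<forall>z' \<in> QZ. \<exists>!z \<in> vecs k. z' - E z \<in> dual n QX)"

definition supports_CCZ :: "nat \<Rightarrow> nat \<Rightarrow> (nat \<Rightarrow> 'a::field) set \<Rightarrow> (nat \<Rightarrow> 'a) set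
    \<Rightarrow> ((nat \<Rightarrow> 'a) \<Rightarrow> (nat \<Rightarrow> 'a)) \<Rightarrow> bool" where
  "supports_CCZ n k QX QZ E \<longleftrightarrow>
     (\<exists>b \<in> vecs n. \<forall>z1 z2 z3 z1' z2' z3'.
        z1 \<in> vecs k \<longrightarrow> z2 \<in> vecs k \<longrightarrow> z3 \<in> vecs k \<longrightarrow>
        z1' \<in> vecs n \<longrightarrow> z2' \<in> vecs n \<longrightarrow> z3' \<in> vecs n \<longrightarrow>
        z1' - E z1 \<in> dual n QX \<longrightarrow> z2' - E z2 \<in> dual n QX \<longrightarrow> z3' - E z3 \<in> dual n QX \<longrightarrow>
        (\<Sum>j<k. z1 j * z2 j * z3 j) = (\<Sum>j<n. b j * z1' j * z2' j * z3' j))"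

end

theory Submission imports Defs "HOL-Library.FuncSet" begin

interpretation fs: vector_space "(*) :: 'a::field \<Rightarrow> 'a \<Rightarrow> 'a"
  by unfold_locales (simp_all add: algebra_simps)

interpretation fp: vector_space_pair "fscale :: 'a::field \<Rightarrow> (nat \<Rightarrow> 'a) \<Rightarrow> (nat \<Rightarrow> 'a)" "(*)"
  by unfold_locales

declare fs.scale_scale[simp del]

interpretation ff: vector_space_pair "fscale :: 'a::field \<Rightarrow> (nat \<Rightarrow> 'a) \<Rightarrow> (nat \<Rightarrow> 'a)" fscale
  by unfold_locales

definition ev :: "nat \<Rightarrow> nat \<Rightarrow> 'a::field" where "ev j = (\<lambda>i. if i = j then 1 else 0)"
definition pun :: "nat \<Rightarrow> (nat \<Rightarrow> 'a) \<Rightarrow> nat \<Rightarrow> 'a" where "pun k x = (\<lambda>i. x (i + k))"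
definition trn :: "nat \<Rightarrow> (nat \<Rightarrow> 'a::zero) \<Rightarrow> nat \<Rightarrow> 'a" where "trn k x = (\<lambda>i. if i < k then x i else 0)"

lemma sum_fun_apply: "(\<Sum>j\<in>A. f j) i = (\<Sum>j\<in>A. f j i)" for f :: "nat \<Rightarrow> nat \<Rightarrow> 'a::comm_monoid_add"
  by (induction A rule: infinite_finite_induct) auto

lemma fscale_apply: "fscale c x i = c * x i" by (simp add: fscale_def)

lemma vecs_expand: assumes "y \<in> vecs m" shows "y = (\<Sum>j<m. fscale (y j) (ev j))"
proof
  fix i show "y i = (\<Sum>j<m. fscale (y j) (ev j)) i"
    using assms by (auto simp: sum_fun_apply fscale_def ev_def vecs_def if_distrib cong: if_cong)
qed

lemma linear_vecs: assumes "Vector_Spaces.linear fscale (*) g" "y \<in> vecs m"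
  shows "g y = (\<Sum>j<m. y j * g (ev j))"
  apply (subst vecs_expand[OF assms(2)])
  by (simp add: fp.linear_sum[OF assms(1)] fp.linear_scale[OF assms(1)])

lemma linear_pun: "Vector_Spaces.linear fscale fscale (pun k)"
  by (auto simp: Vector_Spaces.linear_iff pun_def fscale_def fv.vector_space_axioms)
lemma linear_trn: "Vector_Spaces.linear fscale fscale (trn k)"
  by (auto simp: Vector_Spaces.linear_iff trn_def fscale_def fun_eq_iff fv.vector_space_axioms)

lemma vecs_subspace: "fv.subspace (vecs n)"
  by (auto simp: fv.subspace_def vecs_def fscale_def)

lemma hweight_le: "hweight n x \<le> n"
  unfolding hweight_def by (rule order_trans[OF card_mono[of "{..<n}"]]) auto

lemma hweight_small: assumes "\<forall>i\<ge>k. x i = 0" shows "hweight n x \<le> k"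
  unfolding hweight_def by (rule order_trans[OF card_mono[of "{..<k}"]]) (use assms not_le in auto)

lemma hweight_pun: assumes "x \<in> vecs n" shows "hweight n x \<le> k + hweight (n - k) (pun k x)"
proof -
  have "{i. i < n \<and> x i \<noteq> 0} \<subseteq> {..<k} \<union> (\<lambda>i. i + k) ` {i. i < n - k \<and> pun k x i \<noteq> 0}"
  proof
    fix i assume i: "i \<in> {i. i < n \<and> x i \<noteq> 0}"
    show "i \<in> {..<k} \<union> (\<lambda>i. i + k) ` {i. i < n - k \<and> pun k x i \<noteq> 0}"
    proof (cases "i < k")
      case False
      then have "i = (i - k) + k" by simp
      moreover have "i - k < n - k" using i False by auto
      ultimately show ?thesis using i by (auto simp: pun_def intro!: image_eqI[of i _ "i - k"])
    qed auto
  qed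
  then have "card {i. i < n \<and> x i \<noteq> 0} \<le> card ({..<k} \<union> (\<lambda>i. i + k) ` {i. i < n - k \<and> pun k x i \<noteq> 0})"
    by (intro card_mono) auto
  also have "\<dots> \<le> card {..<k} + card ((\<lambda>i. i + k) ` {i. i < n - k \<and> pun k x i \<noteq> 0})"
    by (rule card_Un_le)
  also have "\<dots> \<le> k + card {i. i < n - k \<and> pun k x i \<noteq> 0}"
    using card_image_le[of "{i. i < n - k \<and> pun k x i \<noteq> 0}" "\<lambda>i. i + k"] by auto
  finally show ?thesis unfolding hweight_def .
qed

lemma dist_zero: assumes "has_distance n V D" "k < D" "x \<in> V" "\<forall>i\<ge>k. x i = 0" shows "x = 0"
proof (rule ccontr)
  assume "x \<noteq> 0"
  then have "D \<le> hweight n x" using assms(1,3) unfolding has_distance_def by blast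
  moreover have "hweight n x \<le> k" by (rule hweight_small[OF assms(4)])
  ultimately show False using assms(2) by simp
qed

lemma pun_vecs: "x \<in> vecs n \<Longrightarrow> pun k x \<in> vecs (n - k)"
  by (auto simp: vecs_def pun_def)

lemma dotp_comm: "dotp n x y = dotp n y x"
  by (simp add: dotp_def mult.commute)

lemma dual_scale: "(\<Sum>i<m. z i * (c * x i)) = c * (\<Sum>i<m. (z i::'a::field) * x i)"
  by (simp add: sum_distrib_left mult_ac)
lemma a2: assumes "x \<in> dual m V" shows "\<forall>z\<in>V. dotp m z (fscale c x) = 0"
proof
  fix z assume "z \<in> V"
  then have "dotp m z x = 0" using assms by (simp add: dual_def)
  then show "dotp m z (fscale c x) = 0" unfolding dotp_def fscale_def dual_scale by simp
qed
lemma a3: assumes "x \<in> dual m V" "y \<in> dual m V" shows "\<forall>z\<in>V. dotp m z (x + y) = 0"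
proof
  fix z assume "z \<in> V"
  then have "dotp m z x = 0" "dotp m z y = 0" using assms by (simp_all add: dual_def)
  then show "dotp m z (x + y) = 0" unfolding dotp_def plus_fun_apply distrib_left sum.distrib by simp
qed
lemma dual_subspace: "code_subspace m (dual m V)"
proof -
  have "dual m V \<subseteq> vecs m" by (auto simp: dual_def)
  moreover have "fv.subspace (dual m V)"
    unfolding fv.subspace_def
  proof (intro conjI ballI allI)
    show "0 \<in> dual m V" unfolding dual_def vecs_def dotp_def by simp
  next
    fix x y assume assms: "x \<in> dual m V" "y \<in> dual m V"
    have "x + y \<in> vecs m" using assms by (auto simp: dual_def vecs_def)
    then show "x + y \<in> dual m V" using a3[OF assms] unfolding dual_def by blast
  next
    fix c x assume assms: "x \<in> dual m V"
    have "fscale c x \<in> vecs m" using assms by (auto simp: dual_def vecs_def fscale_def)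
    then show "fscale c x \<in> dual m V" using a2[OF assms] unfolding dual_def by blast
  qed
  ultimately show ?thesis by (simp add: code_subspace_def)
qed

lemma sep:
  assumes "fv.subspace V" "V \<subseteq> vecs m" "y \<notin> V" "y \<in> vecs m"
  shows "\<exists>w\<in>vecs m. (\<forall>x\<in>V. dotp m x w = 0) \<and> dotp m y w \<noteq> 0"
proof -
  obtain B where B: "B \<subseteq> V" "fv.independent B" "V \<subseteq> fv.span B"
    using fv.basis_exists[of V] by metis
  have "fv.span B \<subseteq> V" using fv.span_minimal[OF B(1) assms(1)] .
  hence yB: "y \<notin> fv.span B" using assms(3) by blast
  hence ind: "fv.independent (insert y B)" by (rule fv.independent_insertI[OF _ B(2)])
  obtain g where g: "Vector_Spaces.linear fscale (*) g" "\<forall>x\<in>insert y B. g x = (if x = y then 1 else 0)"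
    using fp.linear_independent_extend[OF ind, of "\<lambda>x. if x = y then 1 else 0"] by blast
  have gB: "g b = 0" if "b \<in> B" for b
  proof -
    have "b \<noteq> y" using fv.span_base[OF that] yB by blast
    then show ?thesis using g(2) that by simp
  qed
  have gV: "g x = 0" if "x \<in> V" for x
  proof -
    have "x \<in> fv.span B" using that B(3) by blast
    then show ?thesis using fp.linear_eq_0_on_span[OF g(1), of B x] gB by blast
  qed
  define w where "w = (\<lambda>j. if j < m then g (ev j) else (0::'a))"
  have dot: "dotp m x w = g x" if "x \<in> vecs m" for x
  proof -
    have "g x = (\<Sum>j<m. x j * g (ev j))" by (rule linear_vecs[OF g(1) that])
    also have "\<dots> = dotp m x w" unfolding dotp_def w_def by (intro sum.cong) auto
    finally show ?thesis by simp
  qed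
  have "w \<in> vecs m" by (simp add: w_def vecs_def)
  moreover have "\<forall>x\<in>V. dotp m x w = 0"
  proof
    fix x assume "x \<in> V"
    moreover have "x \<in> vecs m" using \<open>x \<in> V\<close> assms(2) by blast
    ultimately show "dotp m x w = 0" using dot[of x] gV[of x] by simp
  qed
  moreover have "g y = 1" using g(2) by simp
  then have "dotp m y w \<noteq> 0" using dot[OF assms(4)] by simp
  ultimately show ?thesis by blast
qed

lemma double_dual:
  assumes "fv.subspace V" "V \<subseteq> vecs m"
  shows "dual m (dual m V) = V"
proof
  show "V \<subseteq> dual m (dual m V)"
    using assms(2) by (auto simp: dual_def dotp_comm)
  show "dual m (dual m V) \<subseteq> V"
  proof
    fix y assume y: "y \<in> dual m (dual m V)"
    show "y \<in> V"
    proof (rule ccontr)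
      assume "y \<notin> V"
      moreover have "y \<in> vecs m" using y by (auto simp: dual_def)
      ultimately obtain w where w: "w \<in> vecs m" "\<forall>x\<in>V. dotp m x w = 0" "dotp m y w \<noteq> 0"
        using sep[OF assms] by blast
      have "w \<in> dual m V" using w by (auto simp: dual_def)
      then have "dotp m w y = 0" using y by (auto simp: dual_def)
      then show False using w(3) dotp_comm by metis
    qed
  qed
qed


lemma finite_vecs: "finite (vecs m :: (nat \<Rightarrow> 'a::{finite,zero}) set)"
proof -
  have "vecs m \<subseteq> (\<lambda>f i. if i < m then f i else 0) ` ({..<m} \<rightarrow>\<^sub>E (UNIV :: 'a set))"
  proof
    fix x :: "nat \<Rightarrow> 'a" assume x: "x \<in> vecs m"
    show "x \<in> (\<lambda>f i. if i < m then f i else 0) ` ({..<m} \<rightarrow>\<^sub>E UNIV)"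
    proof (rule image_eqI[of _ _ "restrict x {..<m}"])
      show "x = (\<lambda>i. if i < m then restrict x {..<m} i else 0)"
        using x by (auto simp: vecs_def fun_eq_iff)
    qed auto
  qed
  moreover have "finite ({..<m} \<rightarrow>\<^sub>E (UNIV :: 'a set))" by (rule finite_PiE) auto
  ultimately show ?thesis using finite_subset by blast
qed

lemma ev_vecs: "j < k \<Longrightarrow> ev j \<in> vecs k"
  by (auto simp: ev_def vecs_def)

lemma vecs_span: assumes "x \<in> vecs k" shows "x \<in> fv.span (ev ` {..<k})"
proof -
  have "(\<Sum>j<k. fscale (x j) (ev j)) \<in> fv.span (ev ` {..<k})"
    by (intro fv.span_sum fv.span_scale fv.span_base) auto
  then show ?thesis using vecs_expand[OF assms] by simp
qed

lemma span_ev_vecs: "fv.span (ev ` {..<k}) \<subseteq> vecs k"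
  by (rule fv.span_minimal) (auto simp: ev_vecs vecs_subspace)

lemma sum_split_nat: fixes k n :: nat assumes "k \<le> n" shows "(\<Sum>i<n. f i) = (\<Sum>i<k. f i) + (\<Sum>i<n - k. (f (i + k)::'a::comm_monoid_add))"
proof -
  have "(\<Sum>i<n. f i) = sum f {0..<k} + sum f {k..<n}"
    using sum.atLeastLessThan_concat[of 0 k n f] assms by (simp add: lessThan_atLeast0)
  also have "sum f {k..<n} = sum f {0 + k..<(n - k) + k}" using assms by simp
  also have "\<dots> = (\<Sum>i\<in>{0..<n-k}. f (i + k))" by (rule sum.shift_bounds_nat_ivl)
  finally show ?thesis by (simp add: lessThan_atLeast0)
qed

lemma dotp_shrink: assumes "k \<le> n" "w \<in> vecs k" shows "dotp n x w = dotp k x w"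
proof -
  have "dotp n x w = (\<Sum>i<k. x i * w i) + (\<Sum>i<n - k. x (i + k) * w (i + k))"
    unfolding dotp_def by (rule sum_split_nat[OF assms(1)])
  also have "(\<Sum>i<n - k. x (i + k) * w (i + k)) = 0" using assms(2) by (simp add: vecs_def)
  finally show ?thesis by (simp add: dotp_def)
qed

lemma trn_vecs: "trn k x \<in> vecs k" by (simp add: trn_def vecs_def)

lemma linear_sigma: "Vector_Spaces.linear fscale (*) (\<lambda>x. \<Sum>j<k. (x j :: 'a::field))"
  by (auto simp: Vector_Spaces.linear_iff fscale_def sum.distrib sum_distrib_left fv.vector_space_axioms fs.vector_space_axioms)

lemma main:
  fixes C :: "(nat \<Rightarrow> 'a::{finite,field}) set" and n k d d' dperp :: nat
  assumes Csub: "C \<subseteq> vecs n" and Csp: "fv.subspace C"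
    and distC: "has_distance n C d" and distD: "has_distance n (cube_code C) d'"
    and distP: "has_distance n (dual n C) dperp"
    and kd: "k < d" and kd': "k < d'" and kp: "k < dperp"
  shows "\<exists>(QX :: (nat \<Rightarrow> 'a) set) QZ E. css_code_ge (n - k) k (min d dperp - k) QX QZ \<and>
       z_encoding (n - k) k QX QZ E \<and> supports_CCZ (n - k) k QX QZ E"
proof -
  define m where "m = n - k"
  have kn: "k \<le> n"
  proof -
    have "\<exists>x\<in>C. x \<noteq> 0 \<and> hweight n x = d" using distC by (simp add: has_distance_def)
    then obtain x :: "nat \<Rightarrow> 'a" where "hweight n x = d" by blast
    moreover have "hweight n x \<le> n" by (rule hweight_le)
    ultimately show ?thesis using kd by linarith
  qed
  have lpun: "Vector_Spaces.linear fscale fscale (pun k :: (nat \<Rightarrow> 'a) \<Rightarrow> _)" by (rule linear_pun)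
  have ltrn: "Vector_Spaces.linear fscale fscale (trn k :: (nat \<Rightarrow> 'a) \<Rightarrow> _)" by (rule linear_trn)
  have pun_shift: "pun k x (i - k) = x i" if "k \<le> i" for x :: "nat \<Rightarrow> 'a" and i
    using that by (simp add: pun_def)
  have surj: "\<exists>c\<in>C. trn k c = z" if z: "z \<in> vecs k" for z
  proof (rule ccontr)
    assume nz: "\<not> (\<exists>c\<in>C. trn k c = z)"
    define V where "V = trn k ` C"
    have Vsp: "fv.subspace V" unfolding V_def by (rule ff.linear_subspace_image[OF ltrn Csp])
    have Vv: "V \<subseteq> vecs k" unfolding V_def using trn_vecs by blast
    have "z \<notin> V" using nz unfolding V_def by blast
    then obtain w where w: "w \<in> vecs k" "\<forall>x\<in>V. dotp k x w = 0" "dotp k z w \<noteq> 0"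
      using sep[OF Vsp Vv _ z] by blast
    have wn: "w \<in> vecs n" using w(1) kn by (auto simp: vecs_def)
    have "dotp n c w = 0" if "c \<in> C" for c
    proof -
      have "dotp n c w = dotp k c w" by (rule dotp_shrink[OF kn w(1)])
      also have "\<dots> = dotp k (trn k c) w" unfolding dotp_def trn_def by (intro sum.cong) auto
      also have "\<dots> = 0" using w(2) that unfolding V_def by blast
      finally show ?thesis .
    qed
    then have "w \<in> dual n C" using wn by (auto simp: dual_def dotp_comm)
    moreover have "\<forall>i\<ge>k. w i = 0" using w(1) by (simp add: vecs_def)
    ultimately have "w = 0" using dist_zero[OF distP kp] by blast
    then show False using w(3) by (simp add: dotp_def)
  qed
  have ex: "\<exists>c. c \<in> C \<and> trn k c = ev j" if "j < k" for j
    using surj[OF ev_vecs[OF that]] by blast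
  define cj where "cj j = (SOME c. c \<in> C \<and> trn k c = ev j)" for j
  have cj: "cj j \<in> C \<and> trn k (cj j) = ev j" if "j < k" for j
    unfolding cj_def by (rule someI_ex[OF ex[OF that]])
  define L where "L z = (\<Sum>j<k. fscale (z j) (cj j))" for z :: "nat \<Rightarrow> 'a"
  have LC: "L z \<in> C" for z
    unfolding L_def using cj by (intro fv.subspace_sum[OF Csp] fv.subspace_scale[OF Csp]) auto
  have linL: "Vector_Spaces.linear fscale fscale L"
    unfolding Vector_Spaces.linear_iff L_def
    by (auto simp: fv.vector_space_axioms fv.scale_left_distrib sum.distrib fv.scale_sum_right fscale_apply)
  have trnL: "trn k (L z) = z" if "z \<in> vecs k" for z
  proof -
    have "trn k (L z) = (\<Sum>j<k. fscale (z j) (trn k (cj j)))"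
      unfolding L_def by (simp add: ff.linear_sum[OF ltrn] ff.linear_scale[OF ltrn])
    also have "\<dots> = (\<Sum>j<k. fscale (z j) (ev j))" using cj by (intro sum.cong) auto
    also have "\<dots> = z" using vecs_expand[OF that] by simp
    finally show ?thesis .
  qed
  have injC: "c = c'" if "c \<in> C" "c' \<in> C" "pun k c = pun k c'" for c c'
  proof -
    have "c - c' \<in> C" using that fv.subspace_diff[OF Csp] by blast
    moreover have "\<forall>i\<ge>k. (c - c') i = 0"
      using that(3) pun_shift by (metis cancel_comm_monoid_add_class.diff_cancel minus_apply)
    ultimately have "c - c' = 0" using dist_zero[OF distC kd] by blast
    then show ?thesis by simp
  qed
  have decomp: "c - L (trn k c) \<in> C \<and> trn k (c - L (trn k c)) = 0" if "c \<in> C" for c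
    using fv.subspace_diff[OF Csp that LC] trnL[OF trn_vecs] ff.linear_diff[OF ltrn] by simp
  define S0 where "S0 = {c\<in>C. trn k c = 0}"
  define S where "S = pun k ` S0"
  define QZ where "QZ = pun k ` C"
  define QX where "QX = dual m S"
  define E where "E = pun k \<circ> L"
  have S0sp: "fv.subspace S0"
  proof -
    have "S0 = C \<inter> {x. trn k x = 0}" unfolding S0_def by blast
    then show ?thesis using fv.subspace_inter[OF Csp ff.linear_subspace_kernel[OF ltrn]] by simp
  qed
  have S0C: "S0 \<subseteq> C" unfolding S0_def by blast
  have Ssp: "fv.subspace S" unfolding S_def by (rule ff.linear_subspace_image[OF lpun S0sp])
  have QZsp: "fv.subspace QZ" unfolding QZ_def by (rule ff.linear_subspace_image[OF lpun Csp])
  have QZv: "QZ \<subseteq> vecs m" unfolding QZ_def m_def using Csub pun_vecs by blast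
  have SQZ: "S \<subseteq> QZ" unfolding S_def QZ_def using S0C by blast
  have Sv: "S \<subseteq> vecs m" using SQZ QZv by blast
  have dualQX: "dual m QX = S" unfolding QX_def by (rule double_dual[OF Ssp Sv])
  have linE: "Vector_Spaces.linear fscale fscale E"
    unfolding E_def by (rule Vector_Spaces.linear_compose[OF linL lpun])
  have EQZ: "E z \<in> QZ" for z unfolding E_def QZ_def using LC by simp
  obtain G where G: "Vector_Spaces.linear fscale fscale G" "\<And>v. v \<in> C \<Longrightarrow> G (pun k v) = v"
    using ff.linear_exists_left_inverse_on[OF lpun Csp] injC unfolding inj_on_def by metis
  define Lam where "Lam = trn k \<circ> G"
  have linLam: "Vector_Spaces.linear fscale fscale Lam"
    unfolding Lam_def by (rule Vector_Spaces.linear_compose[OF G(1) ltrn])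
  have LamE: "Lam (E z) = z" if "z \<in> vecs k" for z
    unfolding Lam_def E_def using G(2)[OF LC] trnL[OF that] by simp
  have LamS: "Lam s = 0" if sS: "s \<in> S" for s
  proof -
    obtain c where "c \<in> S0" "s = pun k c" using sS unfolding S_def by blast
    then show ?thesis unfolding Lam_def using G(2) S0C unfolding S0_def by auto
  qed
  have decompS: "pun k c - E (trn k c) \<in> S" if "c \<in> C" for c
  proof -
    have "pun k c - E (trn k c) = pun k (c - L (trn k c))"
      unfolding E_def by (simp add: ff.linear_diff[OF lpun])
    then show ?thesis using decomp[OF that] unfolding S_def S0_def by blast
  qed
  have zero_dual: "0 \<in> dual m V" for V :: "(nat \<Rightarrow> 'a) set"
    unfolding dual_def vecs_def dotp_def by simp
  obtain B where B: "B \<subseteq> S" "fv.independent B" "S \<subseteq> fv.span B" "card B = fv.dim S"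
    using fv.basis_exists[of S] by metis
  define F where "F = (\<lambda>j. E (ev j)) ` {..<k}"
  have evj: "ev j j = (1::'a)" for j by (simp add: ev_def)
  have injF: "inj_on (\<lambda>j. E (ev j)) {..<k}"
  proof (rule inj_onI)
    fix i j assume ij: "i \<in> {..<k}" "j \<in> {..<k}" "E (ev i) = E (ev j)"
    then have "Lam (E (ev i)) = Lam (E (ev j))" by simp
    moreover have "ev i \<in> vecs k" "ev j \<in> vecs k" using ij ev_vecs by auto
    ultimately have "ev i = (ev j :: nat \<Rightarrow> 'a)" using LamE by metis
    then have "ev i i = (ev j i :: 'a)" by simp
    then show "i = j" by (simp add: ev_def split: if_splits)
  qed
  have cardF: "card F = k" unfolding F_def using card_image[OF injF] by simp
  have finB: "finite B" by (rule finite_subset[OF subset_trans[OF B(1) Sv] finite_vecs])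
  have finF: "finite F" unfolding F_def by simp
  have disj: "B \<inter> F = {}"
  proof -
    { fix x assume x: "x \<in> B" "x \<in> F"
      then obtain j where j: "j < k" "x = E (ev j)" unfolding F_def by blast
      have "Lam x = 0" using LamS B(1) x(1) by blast
      moreover have "Lam x = ev j" using LamE[OF ev_vecs[OF j(1)]] j(2) by simp
      ultimately have "ev j j = (0::'a)" by simp
      then have False using evj[of j] by simp
    }
    then show ?thesis by blast
  qed
  have spanimg: "fv.span ((\<lambda>j. E (ev j)) ` X) = E ` fv.span (ev ` X)" for X
  proof -
    have "fv.span (E ` (ev ` X)) = E ` fv.span (ev ` X)" by (rule ff.linear_span_image[OF linE])
    then show ?thesis by (simp add: image_image)
  qed
  have spanF: "fv.span F = E ` fv.span (ev ` {..<k})" unfolding F_def by (rule spanimg)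
  have SspanB: "fv.span B \<subseteq> S" using fv.span_minimal[OF B(1) Ssp] .
  have indep: "fv.independent (B \<union> F)"
  proof (rule ccontr)
    assume "\<not> fv.independent (B \<union> F)"
    then obtain a where a: "a \<in> B \<union> F" "a \<in> fv.span (B \<union> F - {a})" using fv.dependent_def by blast
    have eq: "B \<union> F - {a} = (B - {a}) \<union> (F - {a})" by blast
    obtain x y where xy: "a = x + y" "x \<in> fv.span (B - {a})" "y \<in> fv.span (F - {a})"
      using a(2) unfolding eq fv.span_Un by blast
    have Lx: "Lam x = 0" using xy(2) fv.span_mono[of "B - {a}" B] SspanB LamS by blast
    have "y \<in> fv.span F" using xy(3) fv.span_mono[of "F - {a}" F] by blast
    then obtain z where z: "z \<in> fv.span (ev ` {..<k})" "y = E z" using spanF by blast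
    have zk: "z \<in> vecs k" using z(1) span_ev_vecs by blast
    have La: "Lam a = z" using xy(1) z(2) Lx LamE[OF zk] ff.linear_add[OF linLam] by simp
    show False
    proof (cases "a \<in> B")
      case True
      then have "Lam a = 0" using LamS B(1) by blast
      then have "z = 0" using La by simp
      then have "y = 0" using z(2) ff.linear_0[OF linE] by simp
      then have "a \<in> fv.span (B - {a})" using xy by simp
      then show False using B(2) True fv.dependent_def by blast
    next
      case False
      then obtain j where j: "j < k" "a = E (ev j)" using a(1) unfolding F_def by blast
      have "F - {a} = (\<lambda>j. E (ev j)) ` ({..<k} - {j})"
        unfolding F_def j(2) using inj_on_image_set_diff[OF injF, of "{..<k}" "{j}"] j(1) by simp
      then have "fv.span (F - {a}) = E ` fv.span (ev ` ({..<k} - {j}))" using spanimg by simp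
      then obtain z' where z': "z' \<in> fv.span (ev ` ({..<k} - {j}))" "y = E z'" using xy(3) by blast
      have "z' \<in> vecs k" using z'(1) fv.span_mono[of "ev ` ({..<k} - {j})" "ev ` {..<k}"] span_ev_vecs by blast
      then have "Lam y = z'" using LamE z'(2) by simp
      have sub: "fv.subspace {v :: nat \<Rightarrow> 'a. v j = 0}"
        by (auto simp: fv.subspace_def fscale_apply)
      have "ev ` ({..<k} - {j}) \<subseteq> {v :: nat \<Rightarrow> 'a. v j = 0}" by (auto simp: ev_def)
      then have "z' j = 0" using z'(1) fv.span_minimal[OF _ sub] by blast
      moreover have "Lam a = ev j" using LamE[OF ev_vecs[OF j(1)]] j(2) by simp
      moreover have "Lam a = z'" using xy(1) \<open>Lam y = z'\<close> Lx ff.linear_add[OF linLam] by simp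
      ultimately show False using evj[of j] by simp
    qed
  qed
  have spanQZ: "QZ \<subseteq> fv.span (B \<union> F)"
  proof
    fix y assume "y \<in> QZ"
    then obtain c where c: "c \<in> C" "y = pun k c" unfolding QZ_def by blast
    have y: "y = (pun k c - E (trn k c)) + E (trn k c)" using c by simp
    have "pun k c - E (trn k c) \<in> fv.span (B \<union> F)"
      using decompS[OF c(1)] B(3) fv.span_mono[of B "B \<union> F"] by blast
    moreover have "E (trn k c) \<in> fv.span (B \<union> F)"
    proof -
      have "E (trn k c) \<in> fv.span F" using spanF vecs_span[OF trn_vecs] by blast
      then show ?thesis using fv.span_mono[of F "B \<union> F"] by blast
    qed
    ultimately show "y \<in> fv.span (B \<union> F)" using y fv.span_add by metis
  qed
  have BFQZ: "B \<union> F \<subseteq> QZ" using B(1) SQZ EQZ unfolding F_def by blast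
  have dimQZ: "fv.dim QZ = fv.dim S + k"
  proof -
    have "fv.dim QZ = card (B \<union> F)" using fv.basis_card_eq_dim[OF BFQZ spanQZ indep] by simp
    also have "\<dots> = card B + card F" using card_Un_disjoint[OF finB finF disj] .
    finally show ?thesis using B(4) cardF by simp
  qed

  have distX: "min d dperp - k \<le> hweight m y" if y: "y \<in> QX" "y \<noteq> 0" for y
  proof -
    have yv: "y \<in> vecs m" and yS: "\<forall>s\<in>S. dotp m s y = 0" using y(1) unfolding QX_def dual_def by auto
    define phi where "phi x = dotp m (pun k x) y" for x
    have linphi: "Vector_Spaces.linear fscale (*) phi"
      unfolding Vector_Spaces.linear_iff phi_def dotp_def pun_def
      by (auto simp: fv.vector_space_axioms fs.vector_space_axioms fscale_apply sum.distrib
          distrib_right sum_distrib_left mult.assoc)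
    define a where "a j = - phi (cj j)" for j
    define yh where "yh = (\<lambda>i. if i < k then a i else y (i - k))"
    have yhv: "yh \<in> vecs n" using yv kn unfolding yh_def vecs_def m_def by auto
    have pyh: "pun k yh = y" unfolding yh_def pun_def by auto
    have phiC: "phi c = (\<Sum>j<k. c j * phi (cj j))" if c: "c \<in> C" for c
    proof -
      have "pun k (c - L (trn k c)) \<in> S" using decomp[OF c] unfolding S_def S0_def by blast
      then have "phi (c - L (trn k c)) = 0" using yS unfolding phi_def by blast
      then have "phi c = phi (L (trn k c))" using fp.linear_diff[OF linphi] by simp
      also have "\<dots> = (\<Sum>j<k. trn k c j * phi (cj j))"
        unfolding L_def by (simp add: fp.linear_sum[OF linphi] fp.linear_scale[OF linphi])
      also have "\<dots> = (\<Sum>j<k. c j * phi (cj j))" by (intro sum.cong) (auto simp: trn_def)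
      finally show ?thesis .
    qed
    have "yh \<in> dual n C"
    proof -
      have "dotp n c yh = 0" if c: "c \<in> C" for c
      proof -
        have "dotp n c yh = (\<Sum>i<k. c i * yh i) + (\<Sum>i<n - k. c (i + k) * yh (i + k))"
          unfolding dotp_def by (rule sum_split_nat[OF kn])
        also have "(\<Sum>i<k. c i * yh i) = - (\<Sum>j<k. c j * phi (cj j))"
          unfolding yh_def a_def by (simp add: sum_negf)
        also have "(\<Sum>i<n - k. c (i + k) * yh (i + k)) = phi c"
          unfolding phi_def dotp_def yh_def pun_def m_def by simp
        finally show ?thesis using phiC[OF c] by simp
      qed
      then show ?thesis using yhv by (auto simp: dual_def dotp_comm)
    qed
    moreover have "yh \<noteq> 0"
    proof
      assume "yh = 0"
      then have "y = pun k 0" using pyh by simp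
      then show False using y(2) by (simp add: pun_def fun_eq_iff)
    qed
    ultimately have "dperp \<le> hweight n yh" using distP unfolding has_distance_def by blast
    moreover have "hweight n yh \<le> k + hweight (n - k) (pun k yh)" by (rule hweight_pun[OF yhv])
    ultimately have "dperp \<le> k + hweight m y" using pyh unfolding m_def by simp
    moreover have "min d dperp \<le> dperp" by simp
    ultimately show ?thesis by linarith
  qed
  have distZ: "min d dperp - k \<le> hweight m y" if y: "y \<in> QZ" "y \<noteq> 0" for y
  proof -
    obtain c where c: "c \<in> C" "y = pun k c" using y(1) unfolding QZ_def by blast
    have "c \<noteq> 0"
    proof
      assume "c = 0"
      then have "y = pun k 0" using c by simp
      then show False using y(2) by (simp add: pun_def fun_eq_iff)
    qed
    then have "d \<le> hweight n c" using distC c(1) unfolding has_distance_def by blast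
    moreover have "hweight n c \<le> k + hweight (n - k) (pun k c)" using hweight_pun Csub c(1) by blast
    ultimately have "d \<le> k + hweight m y" using c(2) unfolding m_def by simp
    moreover have "min d dperp \<le> d" by simp
    ultimately show ?thesis by linarith
  qed
  have css: "css_code_ge m k (min d dperp - k) QX QZ"
    unfolding css_code_ge_def
  proof (intro conjI ballI)
    show "code_subspace m QX" unfolding QX_def by (rule dual_subspace)
    show "code_subspace m QZ" using QZv QZsp by (simp add: code_subspace_def)
    show "dual m QX \<subseteq> QZ" using dualQX SQZ by simp
    show "fv.dim QZ - fv.dim (dual m QX) = k" using dualQX dimQZ by simp
    show "fv.dim (dual m QX) \<le> fv.dim QZ" using dualQX dimQZ by simp
    fix y assume "y \<in> QX - dual m QZ \<union> (QZ - dual m QX)"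
    then show "min d dperp - k \<le> hweight m y"
    proof
      assume "y \<in> QX - dual m QZ"
      moreover then have "y \<noteq> 0" using zero_dual by blast
      ultimately show ?thesis using distX by blast
    next
      assume "y \<in> QZ - dual m QX"
      moreover then have "y \<noteq> 0" using zero_dual by blast
      ultimately show ?thesis using distZ by blast
    qed
  qed
  have zenc: "z_encoding m k QX QZ E"
    unfolding z_encoding_def dualQX
  proof (intro conjI ballI)
    show "Vector_Spaces.linear fscale fscale E" by (rule linE)
    show "E ` vecs k \<subseteq> QZ" using EQZ by blast
    fix z' assume "z' \<in> QZ"
    then obtain c where c: "c \<in> C" "z' = pun k c" unfolding QZ_def by blast
    show "\<exists>!z. z \<in> vecs k \<and> z' - E z \<in> S"
    proof (rule ex1I[of _ "trn k c"])
      show "trn k c \<in> vecs k \<and> z' - E (trn k c) \<in> S" using trn_vecs decompS[OF c(1)] c(2) by simp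
      fix z assume z: "z \<in> vecs k \<and> z' - E z \<in> S"
      have "(z' - E z) - (z' - E (trn k c)) \<in> S"
        using fv.subspace_diff[OF Ssp] z decompS[OF c(1)] c(2) by blast
      moreover have "(z' - E z) - (z' - E (trn k c)) = E (trn k c - z)"
        by (simp add: ff.linear_diff[OF linE])
      ultimately have "Lam (E (trn k c - z)) = 0" using LamS by simp
      moreover have "trn k c - z \<in> vecs k" using z trn_vecs fv.subspace_diff[OF vecs_subspace] by blast
      ultimately show "z = trn k c" using LamE by fastforce
    qed
  qed
  have ccz: "supports_CCZ m k QX QZ E"
  proof -
    define T where "T = {c1 * c2 * c3 | c1 c2 c3. c1 \<in> C \<and> c2 \<in> C \<and> c3 \<in> C}"
    define D where "D = cube_code C"
    have DT: "D = fv.span T" unfolding D_def T_def cube_code_def by simp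
    have Tv: "T \<subseteq> vecs n" using Csub unfolding T_def vecs_def by auto
    have Dv: "D \<subseteq> vecs n" unfolding DT by (rule fv.span_minimal[OF Tv vecs_subspace])
    have Dsp: "fv.subspace D" unfolding DT by (rule fv.subspace_span)
    have distD': "has_distance n D d'" unfolding D_def by (rule distD)
    have injD: "inj_on (pun k) D"
    proof (rule inj_onI)
      fix x x' assume xx: "x \<in> D" "x' \<in> D" "pun k x = pun k x'"
      have "x - x' \<in> D" using fv.subspace_diff[OF Dsp] xx(1,2) by blast
      moreover have "\<forall>i\<ge>k. (x - x') i = 0"
        using xx(3) pun_shift by (metis cancel_comm_monoid_add_class.diff_cancel minus_apply)
      ultimately have "x - x' = 0" using dist_zero[OF distD' kd'] by blast
      then show "x = x'" by simp
    qed
    obtain BD where BD: "BD \<subseteq> D" "fv.independent BD" "D \<subseteq> fv.span BD"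
      using fv.basis_exists[of D] by metis
    have spBD: "fv.span BD \<subseteq> D" using fv.span_minimal[OF BD(1) Dsp] .
    have injBD: "inj_on (pun k) (fv.span BD)" using inj_on_subset[OF injD spBD] .
    have indP: "fv.independent (pun k ` BD)"
      using ff.linear_independent_injective_image[OF lpun BD(2) injBD] .
    define sig where "sig x = (\<Sum>j<k. (x j :: 'a))" for x :: "nat \<Rightarrow> 'a"
    have linsig: "Vector_Spaces.linear fscale (*) sig" unfolding sig_def by (rule linear_sigma)
    obtain g where g: "Vector_Spaces.linear fscale (*) g"
        "\<forall>x\<in>pun k ` BD. g x = sig (the_inv_into BD (pun k) x)"
      using fp.linear_independent_extend[OF indP, of "\<lambda>x. sig (the_inv_into BD (pun k) x)"] by blast
    have injB0: "inj_on (pun k) BD" using inj_on_subset[OF injBD fv.span_superset] .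
    have gB: "g (pun k b) = sig b" if "b \<in> BD" for b
      using g(2) that the_inv_into_f_f[OF injB0 that] by simp
    have gD: "g (pun k x) = sig x" if "x \<in> D" for x
    proof -
      have "(g \<circ> pun k) x = sig x"
        by (rule fp.linear_eq_on[OF Vector_Spaces.linear_compose[OF lpun g(1)] linsig, of x BD])
          (use that BD(3) gB in auto)
      then show ?thesis by simp
    qed
    define b where "b j = (if j < m then g (ev j) else 0)" for j
    have bv: "b \<in> vecs m" unfolding b_def vecs_def by simp
    have lift: "\<exists>c\<in>C. pun k c = z' \<and> trn k c = z" if zz: "z \<in> vecs k" "z' - E z \<in> S" for z z'
    proof -
      obtain s where s: "s \<in> S0" "z' - E z = pun k s" using zz(2) unfolding S_def by blast
      define c where "c = L z + s"
      have "c \<in> C" unfolding c_def using LC s(1) S0C fv.subspace_add[OF Csp] by blast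
      moreover have "pun k c = z'"
      proof -
        have "pun k c = pun k (L z) + pun k s" unfolding c_def by (rule ff.linear_add[OF lpun])
        also have "\<dots> = E z + (z' - E z)" using s(2) unfolding E_def by simp
        finally show ?thesis by simp
      qed
      moreover have "trn k c = z"
      proof -
        have "trn k c = trn k (L z) + trn k s" unfolding c_def by (rule ff.linear_add[OF ltrn])
        then show ?thesis using trnL[OF zz(1)] s(1) unfolding S0_def by simp
      qed
      ultimately show ?thesis by blast
    qed
    show ?thesis
      unfolding supports_CCZ_def dualQX
    proof (intro bexI[OF _ bv] allI impI)
      fix z1 z2 z3 z1' z2' z3'
      assume as: "z1 \<in> vecs k" "z2 \<in> vecs k" "z3 \<in> vecs k" "z1' \<in> vecs m" "z2' \<in> vecs m"
        "z3' \<in> vecs m" "z1' - E z1 \<in> S" "z2' - E z2 \<in> S" "z3' - E z3 \<in> S"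
      obtain c1 where c1: "c1 \<in> C" "pun k c1 = z1'" "trn k c1 = z1" using lift[OF as(1) as(7)] by blast
      obtain c2 where c2: "c2 \<in> C" "pun k c2 = z2'" "trn k c2 = z2" using lift[OF as(2) as(8)] by blast
      obtain c3 where c3: "c3 \<in> C" "pun k c3 = z3'" "trn k c3 = z3" using lift[OF as(3) as(9)] by blast
      define x where "x = c1 * c2 * c3"
      have xD: "x \<in> D" unfolding DT x_def T_def using c1 c2 c3 by (intro fv.span_base) blast
      have xv: "pun k x \<in> vecs m" unfolding m_def using pun_vecs Dv xD by blast
      have "(\<Sum>j<k. z1 j * z2 j * z3 j) = sig x"
        unfolding sig_def x_def c1(3)[symmetric] c2(3)[symmetric] c3(3)[symmetric]
        by (intro sum.cong) (auto simp: trn_def)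
      also have "\<dots> = g (pun k x)" using gD[OF xD] by simp
      also have "\<dots> = (\<Sum>j<m. pun k x j * g (ev j))" by (rule linear_vecs[OF g(1) xv])
      also have "\<dots> = (\<Sum>j<m. b j * z1' j * z2' j * z3' j)"
        unfolding b_def x_def c1(2)[symmetric] c2(2)[symmetric] c3(2)[symmetric]
        by (intro sum.cong) (auto simp: pun_def mult_ac)
      finally show "(\<Sum>j<k. z1 j * z2 j * z3 j) = (\<Sum>j<m. b j * z1' j * z2' j * z3' j)" .
    qed
  qed
  show ?thesis using css zenc ccz unfolding m_def by blast
qed

theorem theorem3p1:
  fixes C :: "(nat \<Rightarrow> 'a::{finite,field}) set"
    and n l d d' dperp :: nat
  assumes "classical_code n l d C"
    and "has_distance n (cube_code C) d'"
    and "has_distance n (dual n C) dperp"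
  shows "\<forall>k. 0 < k \<and> k < min (min l d) (min d' dperp) \<longrightarrow>
    (\<exists>(QX :: (nat \<Rightarrow> 'a) set) QZ E. css_code_ge (n - k) k (min d dperp - k) QX QZ \<and>
       z_encoding (n - k) k QX QZ E \<and> supports_CCZ (n - k) k QX QZ E)"
proof (intro allI impI)
  fix k :: nat assume k: "0 < k \<and> k < min (min l d) (min d' dperp)"
  have C: "C \<subseteq> vecs n" "fv.subspace C" "has_distance n C d"
    using assms(1) unfolding classical_code_def code_subspace_def by auto
  show "\<exists>(QX :: (nat \<Rightarrow> 'a) set) QZ E. css_code_ge (n - k) k (min d dperp - k) QX QZ \<and>
       z_encoding (n - k) k QX QZ E \<and> supports_CCZ (n - k) k QX QZ E"
    by (rule main[OF C assms(2) assms(3)]) (use k in auto)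
qed

end
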